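(* Let $R$ be a commutative Noetherian ring and $M$ an Artinian $R$-module. Then $\operatorname{Supp}_RM\subseteq\operatorname{Cos}_RM$. In particular, $\operatorname{Cos}_RM\cap V(J(M))=\operatorname{Supp}_RM$.
   Context: $\operatorname{Cos}_RM=\{\mathfrak{p}\in\operatorname{Spec}R:\operatorname{Hom}_R(R_{\mathfrak{p}},M)\neq0\}$. For Artinian $M$, $\operatorname{Supp}_RM$ is a finite set of maximal ideals and $J(M)=\bigcap_{\mathfrak{m}\in\operatorname{Supp}_RM}\mathfrak{m}$. *)

theory Defs
  imports "HOL-Algebra.Algebra"
begin

definition ring_module :: "'a ring \<Rightarrow> ('a, 'a) module" where
  "ring_module R = \<lparr> partial_object.carrier = carrier R, monoid.mult = monoid.mult R, monoid.one = \<one>\<^bsub>R\<^esub>,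
      ring.zero = \<zero>\<^bsub>R\<^esub>, ring.add = ring.add R, module.smult = monoid.mult R \<rparr>"

definition loc_rel :: "'a ring \<Rightarrow> ('a, 'b) module \<Rightarrow> 'a set \<Rightarrow> (('b \<times> 'a) \<times> ('b \<times> 'a)) set" where
  "loc_rel R M S = {((x, s), (y, t)). x \<in> carrier M \<and> y \<in> carrier M \<and> s \<in> S \<and> t \<in> S \<and>
      (\<exists>u\<in>S. u \<odot>\<^bsub>M\<^esub> ((t \<odot>\<^bsub>M\<^esub> x) \<ominus>\<^bsub>M\<^esub> (s \<odot>\<^bsub>M\<^esub> y)) = \<zero>\<^bsub>M\<^esub>)}"

text \<open>The localization S^-1 M as an R-module: elements are equivalence classes of
  fractions x/s; x/s + y/t = (t x + s y)/(s t), a (x/s) = (a x)/s, 0 = 0/1.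
  (The ring-multiplication fields of the record are irrelevant for a module.)\<close>
definition localization :: "'a ring \<Rightarrow> ('a, 'b) module \<Rightarrow> 'a set \<Rightarrow> ('a, ('b \<times> 'a) set) module" where
  "localization R M S = \<lparr> partial_object.carrier = (carrier M \<times> S) // loc_rel R M S,
      monoid.mult = (\<lambda>_ _. undefined), monoid.one = undefined,
      ring.zero = loc_rel R M S `` {(\<zero>\<^bsub>M\<^esub>, \<one>\<^bsub>R\<^esub>)},
      ring.add = (\<lambda>XX YY. \<Union>(x, s)\<in>XX. \<Union>(y, t)\<in>YY.
               loc_rel R M S `` {((t \<odot>\<^bsub>M\<^esub> x) \<oplus>\<^bsub>M\<^esub> (s \<odot>\<^bsub>M\<^esub> y), s \<otimes>\<^bsub>R\<^esub> t)}),
      module.smult = (\<lambda>a XX. \<Union>(x, s)\<in>XX. loc_rel R M S `` {(a \<odot>\<^bsub>M\<^esub> x, s)}) \<rparr>"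

definition mod_hom :: "'a ring \<Rightarrow> ('a, 'b) module \<Rightarrow> ('a, 'c) module \<Rightarrow> ('b \<Rightarrow> 'c) set" where
  "mod_hom R M N = {f. f \<in> carrier M \<rightarrow> carrier N \<and>
      (\<forall>x\<in>carrier M. \<forall>y\<in>carrier M. f (x \<oplus>\<^bsub>M\<^esub> y) = f x \<oplus>\<^bsub>N\<^esub> f y) \<and>
      (\<forall>a\<in>carrier R. \<forall>x\<in>carrier M. f (a \<odot>\<^bsub>M\<^esub> x) = a \<odot>\<^bsub>N\<^esub> f x)}"

definition Spec :: "'a ring \<Rightarrow> 'a set set" where
  "Spec R = {p. primeideal p R}"

definition Supp :: "'a ring \<Rightarrow> ('a, 'b) module \<Rightarrow> 'a set set" where
  "Supp R M = {p \<in> Spec R.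
     carrier (localization R M (carrier R - p)) \<noteq> {\<zero>\<^bsub>localization R M (carrier R - p)\<^esub>}}"

definition Cos :: "'a ring \<Rightarrow> ('a, 'b) module \<Rightarrow> 'a set set" where
  "Cos R M = {p \<in> Spec R.
     (\<exists>f \<in> mod_hom R (localization R (ring_module R) (carrier R - p)) M.
        \<exists>Z \<in> carrier (localization R (ring_module R) (carrier R - p)). f Z \<noteq> \<zero>\<^bsub>M\<^esub>)}"

definition V :: "'a ring \<Rightarrow> 'a set \<Rightarrow> 'a set set" where
  "V R I = {p \<in> Spec R. I \<subseteq> p}"

text \<open>J(M) = intersection of the (maximal) ideals in Supp M; empty intersection = R.\<close>
definition J :: "'a ring \<Rightarrow> ('a, 'b) module \<Rightarrow> 'a set" where
  "J R M = carrier R \<inter> \<Inter> (Supp R M)"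

definition artinian_module :: "'a ring \<Rightarrow> ('a, 'b) module \<Rightarrow> bool" where
  "artinian_module R M \<longleftrightarrow> module R M \<and>
     (\<forall>N :: nat \<Rightarrow> 'b set. (\<forall>k. submodule (N k) R M) \<and> (\<forall>k. N (Suc k) \<subseteq> N k)
        \<longrightarrow> (\<exists>n. \<forall>k\<ge>n. N k = N n))"

end

theory Submission imports Defs begin

fun kill :: "('a, 'b, 'c) module_scheme \<Rightarrow> 'a set list \<Rightarrow> 'b \<Rightarrow> bool" where
  "kill M [] x = (x = \<zero>\<^bsub>M\<^esub>)"
| "kill M (m # ms) x = (\<forall>a\<in>m. kill M ms (a \<odot>\<^bsub>M\<^esub> x))"

definition subs :: "('a, 'd) ring_scheme \<Rightarrow> 'a set list \<Rightarrow> bool" where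
  "subs R ms \<longleftrightarrow> (\<forall>m\<in>set ms. m \<subseteq> carrier R)"

context module begin

lemma subs_Cons[simp]: "subs R (m # ms) \<longleftrightarrow> m \<subseteq> carrier R \<and> subs R ms"
  by (auto simp: subs_def)
lemma subs_app[simp]: "subs R (ms @ ms') \<longleftrightarrow> subs R ms \<and> subs R ms'"
  by (auto simp: subs_def)
lemma subs_rep[simp]: "m \<subseteq> carrier R \<Longrightarrow> subs R (replicate k m)"
  by (auto simp: subs_def)

lemma kill_zero: "subs R ms \<Longrightarrow> kill M ms \<zero>\<^bsub>M\<^esub>"
  by (induction ms) (auto simp: subset_iff)

lemma kill_smult: "subs R ms \<Longrightarrow> r \<in> carrier R \<Longrightarrow> x \<in> carrier M \<Longrightarrow> kill M ms x \<Longrightarrow> kill M ms (r \<odot>\<^bsub>M\<^esub> x)"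
proof (induction ms arbitrary: x)
  case Nil then show ?case by simp
next
  case (Cons m ms)
  show ?case
  proof (simp, intro ballI)
    fix a assume a: "a \<in> m"
    then have ac: "a \<in> carrier R" using Cons by auto
    have "a \<odot>\<^bsub>M\<^esub> (r \<odot>\<^bsub>M\<^esub> x) = r \<odot>\<^bsub>M\<^esub> (a \<odot>\<^bsub>M\<^esub> x)"
      using ac Cons.prems by (simp add: smult_assoc1[symmetric] m_comm)
    moreover have "kill M ms (r \<odot>\<^bsub>M\<^esub> (a \<odot>\<^bsub>M\<^esub> x))"
      using Cons a ac by simp
    ultimately show "kill M ms (a \<odot>\<^bsub>M\<^esub> (r \<odot>\<^bsub>M\<^esub> x))" by simp
  qed
qed

lemma kill_add: "subs R ms \<Longrightarrow> x \<in> carrier M \<Longrightarrow> y \<in> carrier M \<Longrightarrow> kill M ms x \<Longrightarrow> kill M ms y \<Longrightarrow> kill M ms (x \<oplus>\<^bsub>M\<^esub> y)"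
proof (induction ms arbitrary: x y)
  case Nil then show ?case by simp
next
  case (Cons m ms)
  show ?case
  proof (simp, intro ballI)
    fix a assume a: "a \<in> m"
    then have ac: "a \<in> carrier R" using Cons by auto
    have "a \<odot>\<^bsub>M\<^esub> (x \<oplus>\<^bsub>M\<^esub> y) = a \<odot>\<^bsub>M\<^esub> x \<oplus>\<^bsub>M\<^esub> a \<odot>\<^bsub>M\<^esub> y"
      using ac Cons.prems by (simp add: smult_r_distr)
    moreover have "kill M ms (a \<odot>\<^bsub>M\<^esub> x \<oplus>\<^bsub>M\<^esub> a \<odot>\<^bsub>M\<^esub> y)"
      using Cons a ac by simp
    ultimately show "kill M ms (a \<odot>\<^bsub>M\<^esub> (x \<oplus>\<^bsub>M\<^esub> y))" by simp
  qed
qed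

lemma kill_neg: "subs R ms \<Longrightarrow> x \<in> carrier M \<Longrightarrow> kill M ms x \<Longrightarrow> kill M ms (\<ominus>\<^bsub>M\<^esub> x)"
proof -
  assume a: "subs R ms" "x \<in> carrier M" "kill M ms x"
  have "\<ominus>\<^bsub>M\<^esub> x = (\<ominus> \<one>) \<odot>\<^bsub>M\<^esub> x" using a by (simp add: smult_l_minus)
  then show ?thesis using kill_smult[OF a(1) _ a(2,3), of "\<ominus> \<one>"] by simp
qed

lemma kill_app1: "subs R ms \<Longrightarrow> subs R ms' \<Longrightarrow> x \<in> carrier M \<Longrightarrow> kill M ms x \<Longrightarrow> kill M (ms @ ms') x"
proof (induction ms arbitrary: x)
  case Nil then show ?case by (simp add: kill_zero)
next
  case (Cons m ms)
  then show ?case by (auto simp: subset_iff)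
qed

lemma kill_app2: "subs R ms \<Longrightarrow> subs R ms' \<Longrightarrow> x \<in> carrier M \<Longrightarrow> kill M ms x \<Longrightarrow> kill M (ms' @ ms) x"
proof (induction ms' arbitrary: x)
  case Nil then show ?case by simp
next
  case (Cons m ms')
  then show ?case by (auto simp: subset_iff intro!: kill_smult)
qed

lemma kill_pow: "m \<subseteq> carrier R \<Longrightarrow> a \<in> m \<Longrightarrow> x \<in> carrier M \<Longrightarrow> kill M (replicate k m) x \<Longrightarrow> (a [^] k) \<odot>\<^bsub>M\<^esub> x = \<zero>\<^bsub>M\<^esub>"
proof (induction k arbitrary: x)
  case 0 then show ?case by simp
next
  case (Suc k)
  have ac: "a \<in> carrier R" using Suc by auto
  have "(a [^] Suc k) \<odot>\<^bsub>M\<^esub> x = (a [^] k) \<odot>\<^bsub>M\<^esub> (a \<odot>\<^bsub>M\<^esub> x)"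
    using ac Suc.prems by (simp add: smult_assoc1)
  also have "\<dots> = \<zero>\<^bsub>M\<^esub>" using Suc ac by simp
  finally show ?case .
qed

end

lemma (in noetherian_ring) maximal_exists:
  assumes "F \<noteq> {}" "F \<subseteq> {I. ideal I R}"
  shows "\<exists>I\<in>F. \<forall>J\<in>F. I \<subseteq> J \<longrightarrow> J = I"
proof (rule subset_Zorn)
  fix CC assume C: "subset.chain F CC"
  show "\<exists>U\<in>F. \<forall>Y0\<in>CC. Y0 \<subseteq> U"
  proof (cases "CC = {}")
    case True then show ?thesis using assms by auto
  next
    case False
    have "subset.chain {I. ideal I R} CC" using C assms(2) unfolding pred_on.chain_def by auto
    then have "\<Union>CC \<in> CC" using ideal_chain_is_trivial[OF False] by simp
    then show ?thesis using C unfolding pred_on.chain_def by (meson Union_upper subsetD)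
  qed
qed


locale artM = module R M + noetherian_ring R
  for R :: "'a ring" (structure) and M :: "('a, 'b) module" (structure) +
  assumes dcc: "\<And>N.  (\<forall>k. submodule (N k) R M) \<Longrightarrow> (\<forall>k. N (Suc k) \<subseteq> N k) \<Longrightarrow> \<exists>n. \<forall>k\<ge>n. N k = N n"
begin

definition good where
  "good x \<longleftrightarrow> (\<exists>ms. (\<forall>m\<in>set ms. maximalideal m R) \<and> kill M ms x)"

definition Aset where
  "Aset ms x = {a \<in> carrier R. kill M ms (a \<odot>\<^bsub>M\<^esub> x)}"

lemma maxl_subs: "\<forall>m\<in>set ms. maximalideal m R \<Longrightarrow> subs R ms"
proof (unfold subs_def, intro ballI subsetI)
  fix m a assume h: "\<forall>m\<in>set ms. maximalideal m R" "m \<in> set ms" "a \<in> m"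
  then have "ideal m R" by (simp add: maximalideal.axioms(1))
  then show "a \<in> carrier R" using h(3) by (rule ideal.Icarr)
qed

lemma Aset_ideal:
  assumes ms: "subs R ms" and x: "x \<in> carrier M"
  shows "ideal (Aset ms x) R"
proof (rule idealI[OF ring_axioms])
  show "subgroup (Aset ms x) (add_monoid R)"
  proof (rule subgroup.intro)
    show "Aset ms x \<subseteq> carrier (add_monoid R)" by (auto simp: Aset_def)
    fix a b assume a: "a \<in> Aset ms x" and b: "b \<in> Aset ms x"
    then show "a \<otimes>\<^bsub>add_monoid R\<^esub> b \<in> Aset ms x"
      using x ms by (simp add: Aset_def smult_l_distr kill_add)
  next
    show "\<one>\<^bsub>add_monoid R\<^esub> \<in> Aset ms x"
      using x ms by (simp add: Aset_def kill_zero)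
  next
    fix a assume a: "a \<in> Aset ms x"
    have "inv\<^bsub>add_monoid R\<^esub> a = \<ominus> a" by (simp add: a_inv_def)
    then show "inv\<^bsub>add_monoid R\<^esub> a \<in> Aset ms x"
      using a x ms by (simp add: Aset_def smult_l_minus kill_neg)
  qed
next
  fix a r assume a: "a \<in> Aset ms x" and r: "r \<in> carrier R"
  then show "r \<otimes> a \<in> Aset ms x"
    using x ms by (simp add: Aset_def smult_assoc1 kill_smult)
  then show "a \<otimes> r \<in> Aset ms x"
    using a r by (simp add: Aset_def m_comm)
qed

lemma exists_max_ideal:
  assumes "ideal I R" "I \<noteq> carrier R"
  shows "\<exists>m. maximalideal m R \<and> I \<subseteq> m"
proof -
  let ?F = "{J. ideal J R \<and> I \<subseteq> J \<and> J \<noteq> carrier R}"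
  have F1: "?F \<noteq> {}" using assms by blast
  have F2: "?F \<subseteq> {J. ideal J R}" by blast
  obtain m where m: "m \<in> ?F" and mx: "\<forall>J\<in>?F. m \<subseteq> J \<longrightarrow> J = m"
    using maximal_exists[OF F1 F2] by (elim bexE) simp
  have "maximalideal m R"
  proof (rule maximalidealI)
    show "ideal m R" using m by auto
    show "carrier R \<noteq> m" using m by auto
    fix J assume "ideal J R" "m \<subseteq> J" "J \<subseteq> carrier R"
    then show "J = m \<or> J = carrier R" using mx m by blast
  qed
  then show ?thesis using m by auto
qed

lemma good_zero: "good \<zero>\<^bsub>M\<^esub>"
  unfolding good_def by (rule exI[of _ "[]"]) simp

lemma good_smult: "r \<in> carrier R \<Longrightarrow> x \<in> carrier M \<Longrightarrow> good x \<Longrightarrow> good (r \<odot>\<^bsub>M\<^esub> x)"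
  unfolding good_def using kill_smult maxl_subs by blast

lemma pow_not_in: "a \<in> carrier R \<Longrightarrow> a [^] (n::nat) \<in> I \<Longrightarrow> \<one> \<notin> I \<Longrightarrow> \<exists>k. a [^] k \<notin> I \<and> a [^] Suc k \<in> I"
proof (induction n)
  case 0 then show ?case by simp
next
  case (Suc n) then show ?case by (cases "a [^] n \<in> I") auto
qed

lemma geom: "u \<in> carrier R \<Longrightarrow> \<exists>q\<in>carrier R. \<one> = q \<otimes> (\<one> \<ominus> u) \<oplus> u [^] (n::nat)"
proof (induction n)
  case 0 then show ?case by (intro bexI[of _ \<zero>]) auto
next
  case (Suc n)
  then obtain q where q: "q \<in> carrier R" "\<one> = q \<otimes> (\<one> \<ominus> u) \<oplus> u [^] n" by auto
  have v: "u [^] n \<in> carrier R" using Suc.prems by simp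
  have "(q \<oplus> u [^] n) \<otimes> (\<one> \<ominus> u) \<oplus> u [^] n \<otimes> u = q \<otimes> (\<one> \<ominus> u) \<oplus> u [^] n"
    using q(1) v Suc.prems by algebra
  then have "\<one> = (q \<oplus> u [^] n) \<otimes> (\<one> \<ominus> u) \<oplus> u [^] n \<otimes> u"
    using q(2) by (rule_tac trans[OF q(2)], rule_tac sym)
  then have "\<one> = (q \<oplus> u [^] n) \<otimes> (\<one> \<ominus> u) \<oplus> u [^] Suc n" by simp
  moreover have "q \<oplus> u [^] n \<in> carrier R" using q(1) v by simp
  ultimately show ?case by blast
qed


lemma good_add: "x \<in> carrier M \<Longrightarrow> y \<in> carrier M \<Longrightarrow> good x \<Longrightarrow> good y \<Longrightarrow> good (x \<oplus>\<^bsub>M\<^esub> y)"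
proof -
  assume xy: "x \<in> carrier M" "y \<in> carrier M" and "good x" "good y"
  then obtain ms1 ms2 where m1: "\<forall>m\<in>set ms1. maximalideal m R" "kill M ms1 x"
    and m2: "\<forall>m\<in>set ms2. maximalideal m R" "kill M ms2 y" unfolding good_def by blast
  have s1: "subs R ms1" and s2: "subs R ms2" using m1 m2 maxl_subs by auto
  have "kill M (ms1 @ ms2) (x \<oplus>\<^bsub>M\<^esub> y)"
    using kill_add[OF _ xy kill_app1[OF s1 s2 xy(1) m1(2)] kill_app2[OF s2 s1 xy(2) m2(2)]] s1 s2 by simp
  moreover have "\<forall>m\<in>set (ms1 @ ms2). maximalideal m R" using m1 m2 by auto
  ultimately show ?thesis unfolding good_def by blast
qed

lemma Aset_Nil: "Aset [] x = {a \<in> carrier R. a \<odot>\<^bsub>M\<^esub> x = \<zero>\<^bsub>M\<^esub>}"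
  by (simp add: Aset_def)

lemma all_good: "x \<in> carrier M \<Longrightarrow> good x"
proof (rule ccontr)
  fix x0 assume x0: "x0 \<in> carrier M" "\<not> good x0"
  let ?F = "{Aset [] z | z. z \<in> carrier M \<and> \<not> good z}"
  have F1: "?F \<noteq> {}" using x0 by blast
  have F2: "?F \<subseteq> {J. ideal J R}" using Aset_ideal[of "[]"] by (auto simp: subs_def)
  obtain I where I: "I \<in> ?F" and Imax: "\<forall>J\<in>?F. I \<subseteq> J \<longrightarrow> J = I"
    using maximal_exists[OF F1 F2] by (elim bexE) simp
  obtain x where x: "x \<in> carrier M" "\<not> good x" and Ix: "I = Aset [] x" using I by blast
  have annmax: "\<And>z. z \<in> carrier M \<Longrightarrow> \<not> good z \<Longrightarrow> I \<subseteq> Aset [] z \<Longrightarrow> Aset [] z = I"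
    using Imax by blast
  have Iid: "ideal I R" using Ix Aset_ideal[of "[]" x] x by (simp add: subs_def)
  have xnz: "x \<noteq> \<zero>\<^bsub>M\<^esub>" using x good_zero by auto
  have oneI: "\<one> \<notin> I" using xnz x by (simp add: Ix Aset_Nil)
  then have "I \<noteq> carrier R" by auto
  then obtain m where m: "maximalideal m R" "I \<subseteq> m" using exists_max_ideal Iid by blast
  have mid: "ideal m R" using m(1) by (simp add: maximalideal.axioms(1))
  have mone: "\<one> \<notin> m"
    using ideal.one_imp_carrier[OF mid] maximalideal.I_notcarr[OF m(1)] by auto
  have Isub: "\<And>w. w \<in> carrier R \<Longrightarrow> I \<subseteq> Aset [] ((w) \<odot>\<^bsub>M\<^esub> x)"
  proof
    fix w b assume w: "w \<in> carrier R" and b: "b \<in> I"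
    then have bc: "b \<in> carrier R" and bx: "b \<odot>\<^bsub>M\<^esub> x = \<zero>\<^bsub>M\<^esub>" using Ix by (auto simp: Aset_Nil)
    have "b \<odot>\<^bsub>M\<^esub> (w \<odot>\<^bsub>M\<^esub> x) = w \<odot>\<^bsub>M\<^esub> (b \<odot>\<^bsub>M\<^esub> x)"
      using w bc x by (simp add: smult_assoc1[symmetric] m_comm)
    then show "b \<in> Aset [] (w \<odot>\<^bsub>M\<^esub> x)" using bx bc w by (simp add: Aset_Nil)
  qed
  have key: "\<forall>a\<in>m. good (a \<odot>\<^bsub>M\<^esub> x)"
  proof
    fix a assume am: "a \<in> m"
    then have ac: "a \<in> carrier R" by (rule ideal.Icarr[OF mid])
    show "good (a \<odot>\<^bsub>M\<^esub> x)"
    proof (cases "a \<in> I")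
      case True
      then have "a \<odot>\<^bsub>M\<^esub> x = \<zero>\<^bsub>M\<^esub>" using Ix by (simp add: Aset_Nil)
      then show ?thesis using good_zero by simp
    next
      case aI: False
      define N where "N k = {r \<odot>\<^bsub>M\<^esub> ((a [^] (k::nat)) \<odot>\<^bsub>M\<^esub> x) | r. r \<in> carrier R}" for k
      have sub: "\<forall>k. submodule (N k) R M"
      proof
        fix k :: nat
        have yk: "(a [^] k) \<odot>\<^bsub>M\<^esub> x \<in> carrier M" using ac x by simp
        show "submodule (N k) R M"
        proof (rule submoduleI)
          show "N k \<subseteq> carrier M" using yk by (auto simp: N_def)
          show "\<zero>\<^bsub>M\<^esub> \<in> N k" unfolding N_def using yk by (intro CollectI exI[of _ \<zero>]) simp
          fix z assume "z \<in> N k"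
          then obtain r where r: "r \<in> carrier R" "z = r \<odot>\<^bsub>M\<^esub> ((a [^] k) \<odot>\<^bsub>M\<^esub> x)" by (auto simp: N_def)
          then show "\<ominus>\<^bsub>M\<^esub> z \<in> N k" unfolding N_def using yk
            by (intro CollectI exI[of _ "\<ominus> r"]) (simp add: smult_l_minus)
        next
          fix z1 z2 assume "z1 \<in> N k" "z2 \<in> N k"
          then obtain r1 r2 where r: "r1 \<in> carrier R" "z1 = r1 \<odot>\<^bsub>M\<^esub> ((a [^] k) \<odot>\<^bsub>M\<^esub> x)"
            "r2 \<in> carrier R" "z2 = r2 \<odot>\<^bsub>M\<^esub> ((a [^] k) \<odot>\<^bsub>M\<^esub> x)" by (auto simp: N_def)
          then show "z1 \<oplus>\<^bsub>M\<^esub> z2 \<in> N k" unfolding N_def using yk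
            by (intro CollectI exI[of _ "r1 \<oplus> r2"]) (simp add: smult_l_distr)
        next
          fix b z assume b: "b \<in> carrier R" and "z \<in> N k"
          then obtain r where r: "r \<in> carrier R" "z = r \<odot>\<^bsub>M\<^esub> ((a [^] k) \<odot>\<^bsub>M\<^esub> x)" by (auto simp: N_def)
          then show "b \<odot>\<^bsub>M\<^esub> z \<in> N k" unfolding N_def using yk b
            by (intro CollectI exI[of _ "b \<otimes> r"]) (simp add: smult_assoc1)
        qed
      qed
      have powS: "\<And>k. (a [^] Suc k) \<odot>\<^bsub>M\<^esub> x = a \<odot>\<^bsub>M\<^esub> ((a [^] k) \<odot>\<^bsub>M\<^esub> x)"
        using ac x by (simp add: smult_assoc1[symmetric] m_comm)
      have dec: "\<forall>k. N (Suc k) \<subseteq> N k"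
      proof (intro allI subsetI)
        fix k z assume "z \<in> N (Suc k)"
        then obtain r where r: "r \<in> carrier R" "z = r \<odot>\<^bsub>M\<^esub> ((a [^] Suc k) \<odot>\<^bsub>M\<^esub> x)" by (auto simp: N_def)
        then have "z = (r \<otimes> a) \<odot>\<^bsub>M\<^esub> ((a [^] k) \<odot>\<^bsub>M\<^esub> x)" using powS ac x by (simp add: smult_assoc1)
        then show "z \<in> N k" unfolding N_def using r ac by blast
      qed
      obtain n where n: "\<forall>k\<ge>n. N k = N n" using dcc[OF sub dec] by blast
      define y where "y = (a [^] n) \<odot>\<^bsub>M\<^esub> x"
      have yc: "y \<in> carrier M" using ac x by (simp add: y_def)
      have "y \<in> N n" unfolding N_def y_def using yc y_def by (intro CollectI exI[of _ \<one>]) simp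
      moreover have "N (Suc n) = N n" by (rule n[rule_format]) simp
      ultimately have "y \<in> N (Suc n)" by simp
      then obtain r where r0: "r \<in> carrier R" "y = r \<odot>\<^bsub>M\<^esub> ((a [^] Suc n) \<odot>\<^bsub>M\<^esub> x)"
        unfolding N_def by blast
      have "(a [^] Suc n) \<odot>\<^bsub>M\<^esub> x = a \<odot>\<^bsub>M\<^esub> y" unfolding y_def by (rule powS)
      then have r: "r \<in> carrier R" "y = r \<odot>\<^bsub>M\<^esub> (a \<odot>\<^bsub>M\<^esub> y)" using r0 by auto
      define u where "u = r \<otimes> a"
      have uc: "u \<in> carrier R" using r ac by (simp add: u_def)
      have yu: "u \<odot>\<^bsub>M\<^esub> y = y" using r(1) ac yc by (simp add: u_def smult_assoc1 r(2)[symmetric])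
      show ?thesis
      proof (cases "a [^] n \<in> I")
        case anI: False
        have ynz: "y \<noteq> \<zero>\<^bsub>M\<^esub>" using anI ac by (auto simp: Ix Aset_Nil y_def)
        define c where "c = \<one> \<ominus> u"
        have cc: "c \<in> carrier R" using uc by (simp add: c_def)
        have cy: "c \<odot>\<^bsub>M\<^esub> y = \<zero>\<^bsub>M\<^esub>"
        proof -
          have "c \<odot>\<^bsub>M\<^esub> y = (\<one> \<oplus> \<ominus> u) \<odot>\<^bsub>M\<^esub> y" by (simp add: c_def a_minus_def)
          also have "\<dots> = y \<oplus>\<^bsub>M\<^esub> \<ominus>\<^bsub>M\<^esub> (u \<odot>\<^bsub>M\<^esub> y)"
            using uc yc by (simp add: smult_l_distr smult_l_minus)
          also have "\<dots> = \<zero>\<^bsub>M\<^esub>" using yu yc by (simp add: M.r_neg)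
          finally show ?thesis .
        qed
        have cI: "c \<notin> I"
        proof
          assume "c \<in> I"
          then have "c \<in> m" using m(2) by auto
          moreover have "u \<in> m" using am r mid by (simp add: u_def ideal.I_l_closed)
          ultimately have "c \<oplus> u \<in> m" using mid by (simp add: additive_subgroup.a_closed ideal.axioms(1))
          moreover have "c \<oplus> u = \<one>" using uc by (simp add: c_def) algebra
          ultimately show False using mone by simp
        qed
        have gy: "good y"
        proof (rule ccontr)
          assume "\<not> good y"
          then have "Aset [] y = I" using annmax[OF yc] Isub[of "a [^] n"] ac by (simp add: y_def)
          moreover have "c \<in> Aset [] y" using cc cy by (simp add: Aset_Nil)
          ultimately show False using cI by simp
        qed
        have cxc: "c \<odot>\<^bsub>M\<^esub> x \<in> carrier M" using cc x by simp
        have gc: "good (c \<odot>\<^bsub>M\<^esub> x)"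
        proof (rule ccontr)
          assume "\<not> good (c \<odot>\<^bsub>M\<^esub> x)"
          then have "Aset [] (c \<odot>\<^bsub>M\<^esub> x) = I" using annmax[OF cxc] Isub[OF cc] by simp
          moreover have "a [^] n \<in> Aset [] (c \<odot>\<^bsub>M\<^esub> x)"
          proof -
            have "(a [^] n) \<odot>\<^bsub>M\<^esub> (c \<odot>\<^bsub>M\<^esub> x) = c \<odot>\<^bsub>M\<^esub> y"
              using ac cc x by (simp add: y_def smult_assoc1[symmetric] m_comm)
            then show ?thesis using cy ac by (simp add: Aset_Nil)
          qed
          ultimately show False using anI by simp
        qed
        obtain q where q: "q \<in> carrier R" "\<one> = q \<otimes> (\<one> \<ominus> u) \<oplus> u [^] n" using geom[OF uc] by blast
        have "x = (q \<otimes> c \<oplus> u [^] n) \<odot>\<^bsub>M\<^esub> x" using q(2)[symmetric] x by (simp add: c_def)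
        also have "\<dots> = q \<odot>\<^bsub>M\<^esub> (c \<odot>\<^bsub>M\<^esub> x) \<oplus>\<^bsub>M\<^esub> (r [^] n) \<odot>\<^bsub>M\<^esub> y"
          using q(1) cc uc x r ac
          by (simp add: smult_l_distr smult_assoc1 u_def pow_mult_distrib[OF m_comm] y_def)
        finally have "x = q \<odot>\<^bsub>M\<^esub> (c \<odot>\<^bsub>M\<^esub> x) \<oplus>\<^bsub>M\<^esub> (r [^] n) \<odot>\<^bsub>M\<^esub> y" .
        moreover have "good (q \<odot>\<^bsub>M\<^esub> (c \<odot>\<^bsub>M\<^esub> x) \<oplus>\<^bsub>M\<^esub> (r [^] n) \<odot>\<^bsub>M\<^esub> y)"
          using good_add good_smult gc gy q cxc yc r by simp
        ultimately show ?thesis using x by simp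
      next
        case anI: True
        obtain k where k: "a [^] k \<notin> I" "a [^] Suc k \<in> I" using pow_not_in[OF ac anI oneI] by blast
        have axc: "a \<odot>\<^bsub>M\<^esub> x \<in> carrier M" using ac x by simp
        show ?thesis
        proof (rule ccontr)
          assume "\<not> good (a \<odot>\<^bsub>M\<^esub> x)"
          then have "Aset [] (a \<odot>\<^bsub>M\<^esub> x) = I" using annmax[OF axc] Isub[OF ac] by simp
          moreover have "a [^] k \<in> Aset [] (a \<odot>\<^bsub>M\<^esub> x)"
          proof -
            have "(a [^] k) \<odot>\<^bsub>M\<^esub> (a \<odot>\<^bsub>M\<^esub> x) = (a [^] Suc k) \<odot>\<^bsub>M\<^esub> x"
              using ac x by (simp add: smult_assoc1)
            then show ?thesis using k(2) ac by (simp add: Aset_Nil Ix)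
          qed
          ultimately show False using k(1) by simp
        qed
      qed
    qed
  qed
  let ?G = "{Aset ms x | ms. \<forall>m\<in>set ms. maximalideal m R}"
  have "Aset [] x \<in> ?G" by force
  then have G1: "?G \<noteq> {}" by blast
  have G2: "?G \<subseteq> {J. ideal J R}"
  proof (rule subsetI)
    fix J assume "J \<in> ?G"
    then obtain ms where ms: "\<forall>m\<in>set ms. maximalideal m R" "J = Aset ms x" by blast
    then show "J \<in> {J. ideal J R}" using Aset_ideal[OF maxl_subs[OF ms(1)] x(1)] by simp
  qed
  obtain A0 where A0: "A0 \<in> ?G" and A0max: "\<forall>J\<in>?G. A0 \<subseteq> J \<longrightarrow> J = A0"
    using maximal_exists[OF G1 G2] by (elim bexE) simp
  obtain ms0 where ms0: "\<forall>m\<in>set ms0. maximalideal m R" "A0 = Aset ms0 x" using A0 by blast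
  have "\<forall>a\<in>m. kill M ms0 (a \<odot>\<^bsub>M\<^esub> x)"
  proof
    fix a assume am: "a \<in> m"
    then have ac: "a \<in> carrier R" by (rule ideal.Icarr[OF mid])
    obtain ms' where ms': "\<forall>m\<in>set ms'. maximalideal m R" "kill M ms' (a \<odot>\<^bsub>M\<^esub> x)"
      using key am unfolding good_def by blast
    have s0: "subs R ms0" and s': "subs R ms'" using maxl_subs[OF ms0(1)] maxl_subs[OF ms'(1)] by auto
    have "A0 \<subseteq> Aset (ms0 @ ms') x"
      using kill_app1[OF s0 s'] x by (auto simp: ms0(2) Aset_def)
    moreover have "Aset (ms0 @ ms') x \<in> ?G" using ms0(1) ms'(1) by (intro CollectI exI[of _ "ms0 @ ms'"]) auto
    ultimately have eq: "Aset (ms0 @ ms') x = A0" using A0max by simp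
    have "a \<in> Aset (ms0 @ ms') x" using kill_app2[OF s' s0 _ ms'(2)] ac x by (simp add: Aset_def)
    then have "a \<in> Aset ms0 x" using eq ms0(2) by simp
    then show "kill M ms0 (a \<odot>\<^bsub>M\<^esub> x)" by (simp add: Aset_def)
  qed
  then have "kill M (m # ms0) x" by simp
  moreover have "\<forall>m'\<in>set (m # ms0). maximalideal m' R" using ms0 m by auto
  ultimately have "good x" unfolding good_def by blast
  then show False using x by simp
qed

definition Gam where "Gam p = {z \<in> carrier M. \<exists>k. kill M (replicate k p) z}"

lemma supp_wit:
  assumes p: "primeideal p R"
    and ne: "carrier (localization R M (carrier R - p)) \<noteq> {\<zero>\<^bsub>localization R M (carrier R - p)\<^esub>}"
  shows "\<exists>x\<in>carrier M. \<forall>u\<in>carrier R - p. u \<odot>\<^bsub>M\<^esub> x \<noteq> \<zero>\<^bsub>M\<^esub>"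
proof (rule ccontr)
  let ?S = "carrier R - p"
  let ?rel = "loc_rel R M ?S"
  assume "\<not> ?thesis"
  then have H: "\<And>x. x \<in> carrier M \<Longrightarrow> \<exists>u\<in>?S. u \<odot>\<^bsub>M\<^esub> x = \<zero>\<^bsub>M\<^esub>" by blast
  have one: "\<one> \<in> ?S" using p primeideal.I_notcarr ideal.one_imp_carrier primeideal.axioms(1) by fastforce
  have z: "(\<zero>\<^bsub>M\<^esub>, \<one>) \<in> carrier M \<times> ?S" using one by simp
  have cl: "XX = ?rel `` {(\<zero>\<^bsub>M\<^esub>, \<one>)}" if XX: "XX \<in> (carrier M \<times> ?S) // ?rel" for XX
  proof -
    obtain x s where xs: "x \<in> carrier M" "s \<in> ?S" "XX = ?rel `` {(x, s)}"
      using XX by (auto elim!: quotientE)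
    have sc: "s \<in> carrier R" using xs by auto
    show ?thesis
    proof (intro equalityI subsetI)
      fix q assume q: "q \<in> XX"
      obtain y t where qq: "q = (y, t)" by (cases q)
      have yt: "y \<in> carrier M" "t \<in> ?S" using q xs qq by (auto simp: loc_rel_def)
      obtain v where v: "v \<in> ?S" "v \<odot>\<^bsub>M\<^esub> y = \<zero>\<^bsub>M\<^esub>" using H[OF yt(1)] by blast
      have "v \<odot>\<^bsub>M\<^esub> ((t \<odot>\<^bsub>M\<^esub> \<zero>\<^bsub>M\<^esub>) \<ominus>\<^bsub>M\<^esub> (\<one> \<odot>\<^bsub>M\<^esub> y)) = \<zero>\<^bsub>M\<^esub>"
        using v yt by (simp add: a_minus_def smult_r_minus)
      then show "q \<in> ?rel `` {(\<zero>\<^bsub>M\<^esub>, \<one>)}" using yt v one qq by (auto simp: loc_rel_def)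
    next
      fix q assume q: "q \<in> ?rel `` {(\<zero>\<^bsub>M\<^esub>, \<one>)}"
      obtain y t where qq: "q = (y, t)" by (cases q)
      have yt: "y \<in> carrier M" "t \<in> ?S" using q qq by (auto simp: loc_rel_def)
      have "(t \<odot>\<^bsub>M\<^esub> x) \<ominus>\<^bsub>M\<^esub> (s \<odot>\<^bsub>M\<^esub> y) \<in> carrier M" using yt xs sc by (simp add: M.minus_closed)
      then obtain w where "w \<in> ?S" "w \<odot>\<^bsub>M\<^esub> ((t \<odot>\<^bsub>M\<^esub> x) \<ominus>\<^bsub>M\<^esub> (s \<odot>\<^bsub>M\<^esub> y)) = \<zero>\<^bsub>M\<^esub>" using H by blast
      then show "q \<in> XX" using xs yt qq by (auto simp: loc_rel_def)
    qed
  qed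
  have "carrier (localization R M ?S) = {\<zero>\<^bsub>localization R M ?S\<^esub>}"
  proof -
    have "?rel `` {(\<zero>\<^bsub>M\<^esub>, \<one>)} \<in> (carrier M \<times> ?S) // ?rel" using z by (rule quotientI)
    then have "(carrier M \<times> ?S) // ?rel = {?rel `` {(\<zero>\<^bsub>M\<^esub>, \<one>)}}" using cl by blast
    then show ?thesis by (simp add: localization_def)
  qed
  then show False using ne by simp
qed

lemma s_lemma:
  assumes p: "primeideal p R"
  shows "\<forall>m\<in>set ms. maximalideal m R \<Longrightarrow> \<exists>s\<in>carrier R - p. \<forall>x\<in>carrier M. kill M ms x \<longrightarrow>
           kill M (replicate (length (filter ((=) p) ms)) p) (s \<odot>\<^bsub>M\<^esub> x)"
proof (induction ms)
  case Nil
  have "\<one> \<in> carrier R - p" using p primeideal.I_notcarr ideal.one_imp_carrier primeideal.axioms(1) by fastforce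
  then show ?case by (intro bexI[of _ \<one>]) auto
next
  case (Cons m ms)
  then obtain s where s: "s \<in> carrier R - p"
    and sk: "\<And>x. x\<in>carrier M \<Longrightarrow> kill M ms x \<Longrightarrow> kill M (replicate (length (filter ((=) p) ms)) p) (s \<odot>\<^bsub>M\<^esub> x)"
    by auto
  have mm: "maximalideal m R" using Cons.prems by simp
  have mc: "m \<subseteq> carrier R" using mm maxl_subs[of "[m]"] by (simp add: subs_def)
  have pc: "p \<subseteq> carrier R" using ideal.Icarr[OF primeideal.axioms(1)[OF p]] by blast
  show ?case
  proof (cases "m = p")
    case True
    show ?thesis
    proof (intro bexI[of _ s] ballI impI)
      fix x assume x: "x \<in> carrier M" and k: "kill M (m # ms) x"
      have "\<forall>b\<in>p. kill M (replicate (length (filter ((=) p) ms)) p) (b \<odot>\<^bsub>M\<^esub> (s \<odot>\<^bsub>M\<^esub> x))"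
      proof
        fix b assume b: "b \<in> p"
        then have bc: "b \<in> carrier R" using pc by auto
        have "b \<odot>\<^bsub>M\<^esub> (s \<odot>\<^bsub>M\<^esub> x) = s \<odot>\<^bsub>M\<^esub> (b \<odot>\<^bsub>M\<^esub> x)"
          using bc s x by (simp add: smult_assoc1[symmetric] m_comm)
        moreover have "kill M ms (b \<odot>\<^bsub>M\<^esub> x)" using k b True by simp
        ultimately show "kill M (replicate (length (filter ((=) p) ms)) p) (b \<odot>\<^bsub>M\<^esub> (s \<odot>\<^bsub>M\<^esub> x))"
          using sk bc x by simp
      qed
      then show "kill M (replicate (length (filter ((=) p) (m # ms))) p) (s \<odot>\<^bsub>M\<^esub> x)"
        using True by simp
    qed (use s in auto)
  next
    case False
    have "\<not> m \<subseteq> p"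
    proof
      assume "m \<subseteq> p"
      then have "p = m \<or> p = carrier R"
        using maximalideal.I_maximal[OF mm primeideal.axioms(1)[OF p]] pc by blast
      then show False using False primeideal.I_notcarr[OF p] by auto
    qed
    then obtain a where a: "a \<in> m" "a \<notin> p" by blast
    have ac: "a \<in> carrier R" using a mc by auto
    have sa: "s \<otimes> a \<in> carrier R - p"
      using s a ac primeideal.I_prime[OF p] by auto
    show ?thesis
    proof (intro bexI[OF _ sa] ballI impI)
      fix x assume x: "x \<in> carrier M" and k: "kill M (m # ms) x"
      have "kill M ms (a \<odot>\<^bsub>M\<^esub> x)" using k a by simp
      then have "kill M (replicate (length (filter ((=) p) ms)) p) (s \<odot>\<^bsub>M\<^esub> (a \<odot>\<^bsub>M\<^esub> x))"
        using sk ac x by simp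
      then show "kill M (replicate (length (filter ((=) p) (m # ms))) p) ((s \<otimes> a) \<odot>\<^bsub>M\<^esub> x)"
        using False s ac x by (simp add: smult_assoc1)
    qed
  qed
qed

lemma supp_info:
  assumes p: "p \<in> Supp R M"
  shows "maximalideal p R" "\<exists>y\<in>Gam p. y \<noteq> \<zero>\<^bsub>M\<^esub> \<and> (\<forall>u\<in>carrier R - p. u \<odot>\<^bsub>M\<^esub> y \<noteq> \<zero>\<^bsub>M\<^esub>)"
proof -
  have pp: "primeideal p R" using p by (simp add: Supp_def Spec_def)
  obtain x where x: "x \<in> carrier M" "\<forall>u\<in>carrier R - p. u \<odot>\<^bsub>M\<^esub> x \<noteq> \<zero>\<^bsub>M\<^esub>"
    using supp_wit[OF pp] p by (auto simp: Supp_def)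
  obtain ms where ms: "\<forall>m\<in>set ms. maximalideal m R" "kill M ms x"
    using all_good[OF x(1)] unfolding good_def by blast
  obtain s where s: "s \<in> carrier R - p" and sk: "\<forall>x\<in>carrier M. kill M ms x \<longrightarrow>
           kill M (replicate (length (filter ((=) p) ms)) p) (s \<odot>\<^bsub>M\<^esub> x)"
    using s_lemma[OF pp ms(1)] by blast
  let ?y = "s \<odot>\<^bsub>M\<^esub> x"
  have yk: "kill M (replicate (length (filter ((=) p) ms)) p) ?y" using sk x ms by blast
  have ync: "?y \<noteq> \<zero>\<^bsub>M\<^esub>" using x s by blast
  have yu: "\<forall>u\<in>carrier R - p. u \<odot>\<^bsub>M\<^esub> ?y \<noteq> \<zero>\<^bsub>M\<^esub>"
  proof
    fix u assume u: "u \<in> carrier R - p"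
    then have "u \<otimes> s \<in> carrier R - p" using s primeideal.I_prime[OF pp] by auto
    then have "(u \<otimes> s) \<odot>\<^bsub>M\<^esub> x \<noteq> \<zero>\<^bsub>M\<^esub>" using x by blast
    then show "u \<odot>\<^bsub>M\<^esub> ?y \<noteq> \<zero>\<^bsub>M\<^esub>" using u s x by (simp add: smult_assoc1)
  qed
  have "length (filter ((=) p) ms) \<noteq> 0"
  proof
    assume "length (filter ((=) p) ms) = 0"
    then show False using yk ync by simp
  qed
  then have "p \<in> set ms" by (metis filter_False length_0_conv)
  then show "maximalideal p R" using ms by blast
  have "?y \<in> Gam p" using yk s x by (auto simp: Gam_def)
  then show "\<exists>y\<in>Gam p. y \<noteq> \<zero>\<^bsub>M\<^esub> \<and> (\<forall>u\<in>carrier R - p. u \<odot>\<^bsub>M\<^esub> y \<noteq> \<zero>\<^bsub>M\<^esub>)"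
    using ync yu by blast
qed

lemma comax:
  assumes m: "maximalideal m R" and t: "t \<in> carrier R" "t \<notin> m"
  shows "\<exists>\<pi>\<in>m. \<exists>r\<in>carrier R. \<one> = \<pi> \<oplus> r \<otimes> t"
proof -
  have mid: "ideal m R" using m by (simp add: maximalideal.axioms(1))
  let ?J = "set_add R m (PIdl t)"
  have J: "ideal ?J R" using add_ideals[OF mid cgenideal_ideal[OF t(1)]] .
  have "m \<subseteq> ?J"
  proof
    fix x assume x: "x \<in> m"
    then have xc: "x \<in> carrier R" using ideal.Icarr[OF mid] by blast
    have "\<zero> \<in> PIdl t" using t by (auto simp: cgenideal_def intro!: exI[of _ \<zero>])
    moreover have "x = x \<oplus> \<zero>" using xc by simp
    ultimately show "x \<in> ?J" using x unfolding set_add_def' by blast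
  qed
  moreover have "t \<in> ?J"
  proof -
    have "\<zero> \<in> m" using mid by (simp add: additive_subgroup.zero_closed ideal.axioms(1))
    moreover have "t \<in> PIdl t" by (rule cgenideal_self[OF t(1)])
    moreover have "t = \<zero> \<oplus> t" using t by simp
    ultimately show ?thesis unfolding set_add_def' by blast
  qed
  ultimately have "?J = carrier R"
    using maximalideal.I_maximal[OF m J] ideal.Icarr[OF J] t(2) by blast
  then have "\<one> \<in> ?J" by simp
  then show ?thesis unfolding set_add_def' cgenideal_def by blast
qed


lemma Gam_carr: "z \<in> Gam p \<Longrightarrow> z \<in> carrier M" by (simp add: Gam_def)

lemma Gam_zero: "p \<subseteq> carrier R \<Longrightarrow> \<zero>\<^bsub>M\<^esub> \<in> Gam p"
  unfolding Gam_def by (auto intro!: exI[of _ 0])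

lemma Gam_add: "p \<subseteq> carrier R \<Longrightarrow> a \<in> Gam p \<Longrightarrow> b \<in> Gam p \<Longrightarrow> a \<oplus>\<^bsub>M\<^esub> b \<in> Gam p"
proof -
  assume pc: "p \<subseteq> carrier R" and a: "a \<in> Gam p" and b: "b \<in> Gam p"
  then obtain k1 k2 where k: "kill M (replicate k1 p) a" "kill M (replicate k2 p) b" and ab: "a \<in> carrier M" "b \<in> carrier M"
    by (auto simp: Gam_def)
  have "kill M (replicate k1 p @ replicate k2 p) (a \<oplus>\<^bsub>M\<^esub> b)"
    using kill_add[OF _ ab kill_app1[OF _ _ ab(1) k(1)] kill_app2[OF _ _ ab(2) k(2)]] pc by simp
  then show ?thesis using ab by (auto simp: Gam_def replicate_add[symmetric])
qed

lemma Gam_smult: "p \<subseteq> carrier R \<Longrightarrow> r \<in> carrier R \<Longrightarrow> a \<in> Gam p \<Longrightarrow> r \<odot>\<^bsub>M\<^esub> a \<in> Gam p"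
proof -
  assume h: "p \<subseteq> carrier R" "r \<in> carrier R" "a \<in> Gam p"
  then obtain k where k: "a \<in> carrier M" "kill M (replicate k p) a" by (auto simp: Gam_def)
  then have "kill M (replicate k p) (r \<odot>\<^bsub>M\<^esub> a)" using kill_smult[OF subs_rep[OF h(1)] h(2)] by blast
  then show ?thesis using k h by (auto simp: Gam_def)
qed

lemma Gam_neg: "p \<subseteq> carrier R \<Longrightarrow> a \<in> Gam p \<Longrightarrow> \<ominus>\<^bsub>M\<^esub> a \<in> Gam p"
proof -
  assume h: "p \<subseteq> carrier R" "a \<in> Gam p"
  then obtain k where k: "a \<in> carrier M" "kill M (replicate k p) a" by (auto simp: Gam_def)
  then have "kill M (replicate k p) (\<ominus>\<^bsub>M\<^esub> a)" using kill_neg[OF subs_rep[OF h(1)]] by blast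
  then show ?thesis using k h by (auto simp: Gam_def)
qed

lemma Gam_minus: "p \<subseteq> carrier R \<Longrightarrow> a \<in> Gam p \<Longrightarrow> b \<in> Gam p \<Longrightarrow> a \<ominus>\<^bsub>M\<^esub> b \<in> Gam p"
  by (simp add: a_minus_def Gam_add Gam_neg)

lemma gam_inj:
  assumes p: "maximalideal p R" and t: "t \<in> carrier R" "t \<notin> p"
  shows "z \<in> Gam p \<Longrightarrow> t \<odot>\<^bsub>M\<^esub> z = \<zero>\<^bsub>M\<^esub> \<Longrightarrow> z = \<zero>\<^bsub>M\<^esub>"
proof -
  obtain \<pi> r where pr: "\<pi> \<in> p" "r \<in> carrier R" "\<one> = \<pi> \<oplus> r \<otimes> t" using comax[OF p t] by blast
  have pc: "p \<subseteq> carrier R" using maxl_subs[of "[p]"] p by (simp add: subs_def)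
  have \<pi>c: "\<pi> \<in> carrier R" using pr pc by auto
  have "\<forall>z. z \<in> carrier M \<longrightarrow> kill M (replicate k p) z \<longrightarrow> t \<odot>\<^bsub>M\<^esub> z = \<zero>\<^bsub>M\<^esub> \<longrightarrow> z = \<zero>\<^bsub>M\<^esub>" for k
  proof (induction k)
    case 0 then show ?case by simp
  next
    case (Suc k)
    show ?case
    proof (intro allI impI)
      fix z assume z: "z \<in> carrier M" "kill M (replicate (Suc k) p) z" "t \<odot>\<^bsub>M\<^esub> z = \<zero>\<^bsub>M\<^esub>"
      have "z = (\<pi> \<oplus> r \<otimes> t) \<odot>\<^bsub>M\<^esub> z" using pr(3)[symmetric] z by simp
      also have "\<dots> = \<pi> \<odot>\<^bsub>M\<^esub> z" using z \<pi>c pr(2) t by (simp add: smult_l_distr smult_assoc1)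
      finally have zz: "z = \<pi> \<odot>\<^bsub>M\<^esub> z" .
      have "kill M (replicate k p) (\<pi> \<odot>\<^bsub>M\<^esub> z)" using z(2) pr(1) by simp
      moreover have "t \<odot>\<^bsub>M\<^esub> (\<pi> \<odot>\<^bsub>M\<^esub> z) = \<pi> \<odot>\<^bsub>M\<^esub> (t \<odot>\<^bsub>M\<^esub> z)"
        using z(1) \<pi>c t by (simp add: smult_assoc1[symmetric] m_comm)
      then have "t \<odot>\<^bsub>M\<^esub> (\<pi> \<odot>\<^bsub>M\<^esub> z) = \<zero>\<^bsub>M\<^esub>" using z(3) \<pi>c by simp
      ultimately have "\<pi> \<odot>\<^bsub>M\<^esub> z = \<zero>\<^bsub>M\<^esub>" using Suc.IH z \<pi>c by simp
      then show "z = \<zero>\<^bsub>M\<^esub>" using zz by simp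
    qed
  qed
  then show "z \<in> Gam p \<Longrightarrow> t \<odot>\<^bsub>M\<^esub> z = \<zero>\<^bsub>M\<^esub> \<Longrightarrow> z = \<zero>\<^bsub>M\<^esub>" by (auto simp: Gam_def)
qed

lemma gam_surj:
  assumes p: "maximalideal p R" and t: "t \<in> carrier R" "t \<notin> p"
  shows "z \<in> Gam p \<Longrightarrow> \<exists>w\<in>Gam p. t \<odot>\<^bsub>M\<^esub> w = z"
proof -
  obtain \<pi> r where pr: "\<pi> \<in> p" "r \<in> carrier R" "\<one> = \<pi> \<oplus> r \<otimes> t" using comax[OF p t] by blast
  have pc: "p \<subseteq> carrier R" using maxl_subs[of "[p]"] p by (simp add: subs_def)
  have \<pi>c: "\<pi> \<in> carrier R" using pr pc by auto
  have "\<forall>z. z \<in> carrier M \<longrightarrow> kill M (replicate k p) z \<longrightarrow> (\<exists>w\<in>carrier M. kill M (replicate k p) w \<and> t \<odot>\<^bsub>M\<^esub> w = z)" for k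
  proof (induction k)
    case 0 then show ?case by (auto intro!: bexI[of _ "\<zero>\<^bsub>M\<^esub>"] simp: t)
  next
    case (Suc k)
    show ?case
    proof (intro allI impI)
      fix z assume z: "z \<in> carrier M" "kill M (replicate (Suc k) p) z"
      have "kill M (replicate k p) (\<pi> \<odot>\<^bsub>M\<^esub> z)" using z(2) pr(1) by simp
      then obtain w1 where w1: "w1 \<in> carrier M" "kill M (replicate k p) w1" "t \<odot>\<^bsub>M\<^esub> w1 = \<pi> \<odot>\<^bsub>M\<^esub> z"
        using Suc.IH z \<pi>c by auto
      define w where "w = w1 \<oplus>\<^bsub>M\<^esub> r \<odot>\<^bsub>M\<^esub> z"
      have wc: "w \<in> carrier M" using w1 z pr by (simp add: w_def)
      have "t \<odot>\<^bsub>M\<^esub> w = \<pi> \<odot>\<^bsub>M\<^esub> z \<oplus>\<^bsub>M\<^esub> (r \<otimes> t) \<odot>\<^bsub>M\<^esub> z"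
        using w1 z pr(2) t by (simp add: w_def smult_r_distr smult_assoc1[symmetric] m_comm)
      also have "\<dots> = (\<pi> \<oplus> r \<otimes> t) \<odot>\<^bsub>M\<^esub> z" using z \<pi>c pr(2) t by (simp add: smult_l_distr)
      also have "\<dots> = z" using pr(3)[symmetric] z by simp
      finally have tw: "t \<odot>\<^bsub>M\<^esub> w = z" .
      have "kill M (replicate k p @ [p]) w1" by (rule kill_app1) (use w1 pc in \<open>auto simp: subs_def\<close>)
      then have "kill M (replicate (Suc k) p) w1" by (simp add: replicate_append_same)
      moreover have "kill M (replicate (Suc k) p) (r \<odot>\<^bsub>M\<^esub> z)"
        by (rule kill_smult[OF subs_rep[OF pc] pr(2) z(1) z(2)])
      ultimately have "kill M (replicate (Suc k) p) w"
        unfolding w_def by (rule kill_add[OF subs_rep[OF pc] w1(1) smult_closed[OF pr(2) z(1)]])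
      then show "\<exists>w\<in>carrier M. kill M (replicate (Suc k) p) w \<and> t \<odot>\<^bsub>M\<^esub> w = z" using wc tw by blast
    qed
  qed
  then show "z \<in> Gam p \<Longrightarrow> \<exists>w\<in>Gam p. t \<odot>\<^bsub>M\<^esub> w = z" by (fastforce simp: Gam_def)
qed

lemma M_minus_eq: "a \<in> carrier M \<Longrightarrow> b \<in> carrier M \<Longrightarrow> a \<ominus>\<^bsub>M\<^esub> b = \<zero>\<^bsub>M\<^esub> \<Longrightarrow> a = b"
proof -
  assume ab: "a \<in> carrier M" "b \<in> carrier M" "a \<ominus>\<^bsub>M\<^esub> b = \<zero>\<^bsub>M\<^esub>"
  have "a = (a \<ominus>\<^bsub>M\<^esub> b) \<oplus>\<^bsub>M\<^esub> b" using ab(1,2) by (simp add: a_minus_def M.a_assoc M.l_neg)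
  then have "a = \<zero>\<^bsub>M\<^esub> \<oplus>\<^bsub>M\<^esub> b" unfolding ab(3) .
  then show ?thesis using ab(2) by simp
qed

lemma gam_uniq:
  assumes p: "maximalideal p R" and t: "t \<in> carrier R" "t \<notin> p"
    and w: "w1 \<in> Gam p" "w2 \<in> Gam p" "t \<odot>\<^bsub>M\<^esub> w1 = t \<odot>\<^bsub>M\<^esub> w2"
  shows "w1 = w2"
proof -
  have pc: "p \<subseteq> carrier R" using maxl_subs[of "[p]"] p by (simp add: subs_def)
  have wc: "w1 \<in> carrier M" "w2 \<in> carrier M" using w Gam_carr by auto
  have "t \<odot>\<^bsub>M\<^esub> (w1 \<ominus>\<^bsub>M\<^esub> w2) = \<zero>\<^bsub>M\<^esub>"
    using wc t w(3) by (simp add: a_minus_def smult_r_distr smult_r_minus M.r_neg)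
  then have "w1 \<ominus>\<^bsub>M\<^esub> w2 = \<zero>\<^bsub>M\<^esub>" using gam_inj[OF p t] Gam_minus[OF pc w(1,2)] by blast
  then show ?thesis using M_minus_eq wc by blast
qed


lemma rm_simps:
  "carrier (ring_module R) = carrier R" "module.smult (ring_module R) = monoid.mult R"
  "ring.add (ring_module R) = ring.add R" "ring.zero (ring_module R) = ring.zero R"
  "a_minus (ring_module R) a b = a \<ominus> b"
  by (simp_all add: ring_module_def a_minus_def a_inv_def m_inv_def)

lemma cos_mem:
  assumes pm: "maximalideal p R" and y: "y \<in> Gam p" "y \<noteq> \<zero>\<^bsub>M\<^esub>"
  shows "p \<in> Cos R M"
proof -
  let ?S = "carrier R - p"
  let ?rel = "loc_rel R (ring_module R) ?S"
  let ?L = "localization R (ring_module R) ?S"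
  have pp: "primeideal p R" using pm by (rule maximalideal_prime)
  have pc: "p \<subseteq> carrier R" using maxl_subs[of "[p]"] pm by (simp add: subs_def)
  have one: "\<one> \<in> ?S" using pp primeideal.I_notcarr ideal.one_imp_carrier primeideal.axioms(1) by fastforce
  have Smul: "\<And>a b. a \<in> ?S \<Longrightarrow> b \<in> ?S \<Longrightarrow> a \<otimes> b \<in> ?S"
    using primeideal.I_prime[OF pp] by auto
  have yc: "y \<in> carrier M" using y Gam_carr by auto
  have relD: "((a, s), (b, t)) \<in> ?rel \<longleftrightarrow> a \<in> carrier R \<and> b \<in> carrier R \<and> s \<in> ?S \<and> t \<in> ?S \<and>
      (\<exists>u\<in>?S. u \<otimes> ((t \<otimes> a) \<ominus> (s \<otimes> b)) = \<zero>)" for a s b t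
    by (simp add: loc_rel_def rm_simps)
  have refl: "(P, P) \<in> ?rel" if hh: "P \<in> carrier R \<times> ?S" for P
  proof -
    obtain a s where P: "P = (a, s)" "a \<in> carrier R" "s \<in> ?S" using hh by (cases P) auto
    have "\<one> \<otimes> ((s \<otimes> a) \<ominus> (s \<otimes> a)) = \<zero>" using P by (simp add: a_minus_def R.r_neg)
    then show ?thesis using P one relD by blast
  qed
  define dv where "dv t z = (THE w. w \<in> Gam p \<and> t \<odot>\<^bsub>M\<^esub> w = z)" for t z
  have dv: "dv t z \<in> Gam p \<and> t \<odot>\<^bsub>M\<^esub> dv t z = z" if hh: "t \<in> ?S" "z \<in> Gam p" for t z
  proof -
    obtain w where w: "w \<in> Gam p" "t \<odot>\<^bsub>M\<^esub> w = z" using gam_surj[OF pm _ _ hh(2)] hh(1) by auto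
    have "dv t z = w" unfolding dv_def
      by (rule the_equality) (use w gam_uniq[OF pm] hh(1) in auto)
    then show ?thesis using w by simp
  qed
  have dvu: "dv t z = w" if hh: "t \<in> ?S" "w \<in> Gam p" "t \<odot>\<^bsub>M\<^esub> w = z" for t z w
  proof -
    have zg: "z \<in> Gam p" using hh Gam_smult[OF pc] by auto
    show ?thesis using dv[OF hh(1) zg] hh gam_uniq[OF pm, of t "dv t z" w] by auto
  qed
  define val where "val P = dv (snd P) (fst P \<odot>\<^bsub>M\<^esub> y)" for P
  have valG: "val (a, s) \<in> Gam p" and valE: "s \<odot>\<^bsub>M\<^esub> val (a, s) = a \<odot>\<^bsub>M\<^esub> y"
    if hh: "a \<in> carrier R" "s \<in> ?S" for a s
    using dv[OF hh(2) Gam_smult[OF pc hh(1) y(1)]] by (simp_all add: val_def)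
  have valU: "val (a, s) = w" if hh: "a \<in> carrier R" "s \<in> ?S" "w \<in> Gam p" "s \<odot>\<^bsub>M\<^esub> w = a \<odot>\<^bsub>M\<^esub> y" for a s w
    using dvu[OF hh(2,3,4)] by (simp add: val_def)
  have wd: "val P = val Q" if hh: "(P, Q) \<in> ?rel" for P Q
  proof -
    obtain a s b t where PQ: "P = (a, s)" "Q = (b, t)" by (cases P, cases Q) auto
    then obtain u where h: "a \<in> carrier R" "b \<in> carrier R" "s \<in> ?S" "t \<in> ?S" "u \<in> ?S"
      "u \<otimes> ((t \<otimes> a) \<ominus> (s \<otimes> b)) = \<zero>" using hh relD by blast
    have c: "a \<in> carrier R" "b \<in> carrier R" "s \<in> carrier R" "t \<in> carrier R" "u \<in> carrier R" using h by auto
    have "u \<otimes> (t \<otimes> a) = u \<otimes> ((t \<otimes> a) \<ominus> (s \<otimes> b)) \<oplus> u \<otimes> (s \<otimes> b)" using c by algebra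
    then have e: "u \<otimes> (t \<otimes> a) = u \<otimes> (s \<otimes> b)" using h(6) c by simp
    let ?w1 = "val (a, s)" and ?w2 = "val (b, t)"
    have w1: "?w1 \<in> Gam p" "s \<odot>\<^bsub>M\<^esub> ?w1 = a \<odot>\<^bsub>M\<^esub> y" using valG valE h by auto
    have w2: "?w2 \<in> Gam p" "t \<odot>\<^bsub>M\<^esub> ?w2 = b \<odot>\<^bsub>M\<^esub> y" using valG valE h by auto
    have w1c: "?w1 \<in> carrier M" and w2c: "?w2 \<in> carrier M" using w1 w2 Gam_carr by auto
    have "((u \<otimes> t) \<otimes> s) \<odot>\<^bsub>M\<^esub> ?w1 = (u \<otimes> t) \<odot>\<^bsub>M\<^esub> (a \<odot>\<^bsub>M\<^esub> y)"
      using c w1c w1(2) by (simp add: smult_assoc1)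
    also have "\<dots> = (u \<otimes> (t \<otimes> a)) \<odot>\<^bsub>M\<^esub> y" using c yc by (simp add: smult_assoc1 m_assoc)
    also have "\<dots> = (u \<otimes> (s \<otimes> b)) \<odot>\<^bsub>M\<^esub> y" using e by simp
    also have "\<dots> = (u \<otimes> s) \<odot>\<^bsub>M\<^esub> (t \<odot>\<^bsub>M\<^esub> ?w2)" using c yc w2(2) by (simp add: smult_assoc1 m_assoc)
    also have "\<dots> = ((u \<otimes> t) \<otimes> s) \<odot>\<^bsub>M\<^esub> ?w2" using c w2c by (simp add: smult_assoc1[symmetric] m_assoc m_comm m_lcomm)
    finally have "((u \<otimes> t) \<otimes> s) \<odot>\<^bsub>M\<^esub> ?w1 = ((u \<otimes> t) \<otimes> s) \<odot>\<^bsub>M\<^esub> ?w2" .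
    moreover have "(u \<otimes> t) \<otimes> s \<in> ?S" using h Smul by auto
    ultimately have "?w1 = ?w2" using gam_uniq[OF pm] w1(1) w2(1) by blast
    then show ?thesis using PQ by simp
  qed
  have carrL: "carrier ?L = (carrier R \<times> ?S) // ?rel" by (simp add: localization_def rm_simps)
  define f where "f XX = val (SOME P. P \<in> XX)" for XX
  have fX: "f XX = val P" if hh: "XX \<in> carrier ?L" "P \<in> XX" for XX P
  proof -
    obtain q where q: "q \<in> carrier R \<times> ?S" "XX = ?rel `` {q}" using hh(1) carrL by (auto elim!: quotientE)
    have "(SOME P. P \<in> XX) \<in> XX" using hh(2) by (rule someI)
    then have "val q = val (SOME P. P \<in> XX)" using q wd by auto
    moreover have "val q = val P" using q hh(2) wd by auto
    ultimately show ?thesis by (simp add: f_def)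
  qed
  have XXne: "\<exists>a s. (a, s) \<in> XX \<and> a \<in> carrier R \<and> s \<in> ?S" if hh: "XX \<in> carrier ?L" for XX
  proof -
    obtain q where q: "q \<in> carrier R \<times> ?S" "XX = ?rel `` {q}" using hh carrL by (auto elim!: quotientE)
    then have "q \<in> XX" using refl by auto
    then show ?thesis using q by (cases q) auto
  qed
  have memL: "P \<in> XX \<Longrightarrow> XX \<in> carrier ?L \<Longrightarrow> P \<in> carrier R \<times> ?S" for P XX
    using carrL by (auto elim!: quotientE simp: loc_rel_def rm_simps)
  have hom: "f \<in> mod_hom R ?L M"
    unfolding mod_hom_def
  proof (intro CollectI conjI ballI)
    show "f \<in> carrier ?L \<rightarrow> carrier M"
    proof
      fix XX assume XX: "XX \<in> carrier ?L"
      then obtain a s where as: "(a, s) \<in> XX" "a \<in> carrier R" "s \<in> ?S" using XXne by blast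
      then show "f XX \<in> carrier M" using fX[OF XX as(1)] valG Gam_carr by auto
    qed
  next
    fix XX YY assume XX: "XX \<in> carrier ?L" and YY: "YY \<in> carrier ?L"
    obtain a s where as: "(a, s) \<in> XX" "a \<in> carrier R" "s \<in> ?S" using XXne[OF XX] by blast
    obtain b t where bt: "(b, t) \<in> YY" "b \<in> carrier R" "t \<in> ?S" using XXne[OF YY] by blast
    have addL: "XX \<oplus>\<^bsub>?L\<^esub> YY = (\<Union>(a, s)\<in>XX. \<Union>(b, t)\<in>YY. ?rel `` {((t \<otimes> a) \<oplus> (s \<otimes> b), s \<otimes> t)})"
      by (simp add: localization_def ring_module_def)
    let ?P0 = "((t \<otimes> a) \<oplus> (s \<otimes> b), s \<otimes> t)"
    have "?P0 \<in> carrier R \<times> ?S" using as bt Smul by auto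
    then have "?P0 \<in> XX \<oplus>\<^bsub>?L\<^esub> YY" unfolding addL using as bt refl by blast
    then have sm: "(SOME P. P \<in> XX \<oplus>\<^bsub>?L\<^esub> YY) \<in> XX \<oplus>\<^bsub>?L\<^esub> YY" by (rule someI)
    then obtain a' s' b' t' where h: "(a', s') \<in> XX" "(b', t') \<in> YY"
      "(((t' \<otimes> a') \<oplus> (s' \<otimes> b'), s' \<otimes> t'), (SOME P. P \<in> XX \<oplus>\<^bsub>?L\<^esub> YY)) \<in> ?rel"
      unfolding addL by blast
    have c: "a' \<in> carrier R" "s' \<in> ?S" "b' \<in> carrier R" "t' \<in> ?S"
      using memL[OF h(1) XX] memL[OF h(2) YY] by auto
    have cc: "s' \<in> carrier R" "t' \<in> carrier R" using c by auto
    let ?w1 = "val (a', s')" and ?w2 = "val (b', t')"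
    have w1: "?w1 \<in> Gam p" "s' \<odot>\<^bsub>M\<^esub> ?w1 = a' \<odot>\<^bsub>M\<^esub> y" using valG valE c by auto
    have w2: "?w2 \<in> Gam p" "t' \<odot>\<^bsub>M\<^esub> ?w2 = b' \<odot>\<^bsub>M\<^esub> y" using valG valE c by auto
    have w1c: "?w1 \<in> carrier M" and w2c: "?w2 \<in> carrier M" using w1 w2 Gam_carr by auto
    have "(s' \<otimes> t') \<odot>\<^bsub>M\<^esub> (?w1 \<oplus>\<^bsub>M\<^esub> ?w2) = t' \<odot>\<^bsub>M\<^esub> (s' \<odot>\<^bsub>M\<^esub> ?w1) \<oplus>\<^bsub>M\<^esub> s' \<odot>\<^bsub>M\<^esub> (t' \<odot>\<^bsub>M\<^esub> ?w2)"
      using cc w1c w2c by (simp add: smult_r_distr smult_assoc1[symmetric] m_comm)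
    also have "\<dots> = ((t' \<otimes> a') \<oplus> (s' \<otimes> b')) \<odot>\<^bsub>M\<^esub> y"
      using w1(2) w2(2) cc c yc by (simp add: smult_l_distr smult_assoc1)
    finally have "val ((t' \<otimes> a') \<oplus> (s' \<otimes> b'), s' \<otimes> t') = ?w1 \<oplus>\<^bsub>M\<^esub> ?w2"
      using c cc Smul w1(1) w2(1) by (intro valU) (auto intro: Gam_add[OF pc])
    moreover have "f (XX \<oplus>\<^bsub>?L\<^esub> YY) = val ((t' \<otimes> a') \<oplus> (s' \<otimes> b'), s' \<otimes> t')"
      using wd[OF h(3)] by (simp add: f_def)
    ultimately show "f (XX \<oplus>\<^bsub>?L\<^esub> YY) = f XX \<oplus>\<^bsub>M\<^esub> f YY"
      using fX[OF XX h(1)] fX[OF YY h(2)] by simp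
  next
    fix r XX assume r: "r \<in> carrier R" and XX: "XX \<in> carrier ?L"
    obtain a s where as: "(a, s) \<in> XX" "a \<in> carrier R" "s \<in> ?S" using XXne[OF XX] by blast
    have smL: "r \<odot>\<^bsub>?L\<^esub> XX = (\<Union>(a, s)\<in>XX. ?rel `` {(r \<otimes> a, s)})"
      by (simp add: localization_def ring_module_def)
    have "(r \<otimes> a, s) \<in> carrier R \<times> ?S" using as r by auto
    then have "(r \<otimes> a, s) \<in> r \<odot>\<^bsub>?L\<^esub> XX" unfolding smL using as refl by blast
    then have sm: "(SOME P. P \<in> r \<odot>\<^bsub>?L\<^esub> XX) \<in> r \<odot>\<^bsub>?L\<^esub> XX" by (rule someI)
    then obtain a' s' where h: "(a', s') \<in> XX" "((r \<otimes> a', s'), (SOME P. P \<in> r \<odot>\<^bsub>?L\<^esub> XX)) \<in> ?rel"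
      unfolding smL by blast
    have c: "a' \<in> carrier R" "s' \<in> ?S" using memL[OF h(1) XX] by auto
    let ?w1 = "val (a', s')"
    have w1: "?w1 \<in> Gam p" "s' \<odot>\<^bsub>M\<^esub> ?w1 = a' \<odot>\<^bsub>M\<^esub> y" using valG valE c by auto
    have w1c: "?w1 \<in> carrier M" using w1 Gam_carr by auto
    have "s' \<odot>\<^bsub>M\<^esub> (r \<odot>\<^bsub>M\<^esub> ?w1) = (r \<otimes> a') \<odot>\<^bsub>M\<^esub> y"
    proof -
      have "s' \<odot>\<^bsub>M\<^esub> (r \<odot>\<^bsub>M\<^esub> ?w1) = r \<odot>\<^bsub>M\<^esub> (s' \<odot>\<^bsub>M\<^esub> ?w1)"
        using c r w1c by (simp add: smult_assoc1[symmetric] m_comm)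
      also have "\<dots> = (r \<otimes> a') \<odot>\<^bsub>M\<^esub> y" using w1(2) c r yc by (simp add: smult_assoc1)
      finally show ?thesis .
    qed
    then have "val (r \<otimes> a', s') = r \<odot>\<^bsub>M\<^esub> ?w1"
      using c r w1(1) by (intro valU) (auto intro: Gam_smult[OF pc])
    moreover have "f (r \<odot>\<^bsub>?L\<^esub> XX) = val (r \<otimes> a', s')"
      using wd[OF h(2)] by (simp add: f_def)
    ultimately show "f (r \<odot>\<^bsub>?L\<^esub> XX) = r \<odot>\<^bsub>M\<^esub> f XX"
      using fX[OF XX h(1)] by simp
  qed
  let ?Z = "?rel `` {(\<one>, \<one>)}"
  have Z: "?Z \<in> carrier ?L" unfolding carrL using one by (intro quotientI) auto
  have "(\<one>, \<one>) \<in> ?Z" using refl one by auto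
  then have "f ?Z = val (\<one>, \<one>)" using fX[OF Z] by simp
  also have "\<dots> = y" using one y(1) yc by (intro valU) auto
  finally have "f ?Z \<noteq> \<zero>\<^bsub>M\<^esub>" using y(2) by simp
  then show ?thesis using hom Z pp unfolding Cos_def Spec_def by blast
qed


lemma diff_elem:
  assumes m: "maximalideal m R" and q: "primeideal q R" and ne: "m \<noteq> q"
  shows "\<exists>a\<in>m. a \<notin> q"
proof (rule ccontr)
  assume "\<not> ?thesis"
  then have "m \<subseteq> q" by blast
  moreover have qc: "q \<subseteq> carrier R" using ideal.Icarr[OF primeideal.axioms(1)[OF q]] by blast
  ultimately have "q = m \<or> q = carrier R"
    using maximalideal.I_maximal[OF m primeideal.axioms(1)[OF q]] by blast
  then show False using ne primeideal.I_notcarr[OF q] by auto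
qed

lemma prime_pow: "primeideal q R \<Longrightarrow> a \<in> carrier R \<Longrightarrow> a \<notin> q \<Longrightarrow> a [^] (k::nat) \<notin> q"
proof (induction k)
  case 0
  then show ?case using primeideal.I_notcarr ideal.one_imp_carrier primeideal.axioms(1) by fastforce
next
  case (Suc k)
  then show ?case using primeideal.I_prime[OF Suc.prems(1), of "a [^] k" a] by auto
qed

inductive_set Tset :: "(nat \<Rightarrow> 'a set) \<Rightarrow> nat \<Rightarrow> 'b set" for g j where
  T0: "\<zero>\<^bsub>M\<^esub> \<in> Tset g j"
| Tadd: "z \<in> Gam (g i) \<Longrightarrow> j \<le> i \<Longrightarrow> w \<in> Tset g j \<Longrightarrow> z \<oplus>\<^bsub>M\<^esub> w \<in> Tset g j"

lemma finite_Supp: "finite (Supp R M)"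
proof (rule ccontr)
  assume "infinite (Supp R M)"
  then obtain g :: "nat \<Rightarrow> 'a set" where g: "inj g" "range g \<subseteq> Supp R M"
    using infinite_countable_subset by blast
  have gS: "g i \<in> Supp R M" for i using g by auto
  have gm: "maximalideal (g i) R" for i using supp_info(1)[OF gS] .
  have gp: "primeideal (g i) R" for i using gm by (rule maximalideal_prime)
  have gc: "g i \<subseteq> carrier R" for i using maxl_subs[of "[g i]"] gm by (simp add: subs_def)
  have Tc: "w \<in> Tset g j \<Longrightarrow> w \<in> carrier M" for w j
    by (induction rule: Tset.induct) (auto dest: Gam_carr)
  have Tsub: "submodule (Tset g j) R M" for j
  proof (rule submoduleI)
    show "Tset g j \<subseteq> carrier M" using Tc by blast
    show "\<zero>\<^bsub>M\<^esub> \<in> Tset g j" by (rule T0)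
  next
    fix a assume "a \<in> Tset g j"
    then show "\<ominus>\<^bsub>M\<^esub> a \<in> Tset g j"
    proof (induction rule: Tset.induct)
      case T0
      have "\<zero>\<^bsub>M\<^esub> = \<ominus>\<^bsub>M\<^esub> \<zero>\<^bsub>M\<^esub>" using smult_l_minus[of \<one> "\<zero>\<^bsub>M\<^esub>"] by simp
      then show ?case using Tset.T0 by metis
    next
      case (Tadd z i w)
      have zc: "z \<in> carrier M" using Tadd Gam_carr by auto
      have "\<ominus>\<^bsub>M\<^esub> (z \<oplus>\<^bsub>M\<^esub> w) = \<ominus>\<^bsub>M\<^esub> z \<oplus>\<^bsub>M\<^esub> \<ominus>\<^bsub>M\<^esub> w"
        using zc Tc[OF Tadd(3)] by (simp add: M.minus_add)
      then show ?case using Tset.Tadd[OF Gam_neg[OF gc Tadd.hyps(1)] Tadd.hyps(2) Tadd.IH] by simp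
    qed
  next
    fix a b assume "a \<in> Tset g j" "b \<in> Tset g j"
    then show "a \<oplus>\<^bsub>M\<^esub> b \<in> Tset g j"
    proof (induction rule: Tset.induct)
      case T0 then show ?case using Tc by simp
    next
      case (Tadd z i w)
      have zc: "z \<in> carrier M" using Tadd Gam_carr by auto
      have "(z \<oplus>\<^bsub>M\<^esub> w) \<oplus>\<^bsub>M\<^esub> b = z \<oplus>\<^bsub>M\<^esub> (w \<oplus>\<^bsub>M\<^esub> b)"
        using zc Tc[OF Tadd.hyps(3)] Tc[OF Tadd.prems] by (simp add: M.a_assoc)
      then show ?case using Tset.Tadd[OF Tadd.hyps(1) Tadd.hyps(2) Tadd.IH[OF Tadd.prems]] by simp
    qed
  next
    fix r a assume r: "r \<in> carrier R" and aT: "a \<in> Tset g j"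
    from aT show "r \<odot>\<^bsub>M\<^esub> a \<in> Tset g j"
    proof (induction rule: Tset.induct)
      case T0 then show ?case using r by (simp add: Tset.T0)
    next
      case (Tadd z i w)
      have zc: "z \<in> carrier M" using Tadd Gam_carr by auto
      have "r \<odot>\<^bsub>M\<^esub> (z \<oplus>\<^bsub>M\<^esub> w) = r \<odot>\<^bsub>M\<^esub> z \<oplus>\<^bsub>M\<^esub> r \<odot>\<^bsub>M\<^esub> w"
        using zc Tc[OF Tadd(3)] r by (simp add: smult_r_distr)
      then show ?case using Tset.Tadd[OF Gam_smult[OF gc r Tadd.hyps(1)] Tadd.hyps(2) Tadd.IH] by simp
    qed
  qed
  have Tdec: "Tset g (Suc j) \<subseteq> Tset g j" for j
  proof
    fix w assume "w \<in> Tset g (Suc j)"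
    then show "w \<in> Tset g j"
    proof (induction rule: Tset.induct)
      case T0 show ?case by (rule Tset.T0)
    next
      case (Tadd z i w)
      have "j \<le> i" using Tadd.hyps(2) by simp
      then show ?case by (rule Tset.Tadd[OF Tadd.hyps(1) _ Tadd.IH])
    qed
  qed
  have "\<exists>n. \<forall>k\<ge>n. Tset g k = Tset g n" by (rule dcc) (use Tsub Tdec in auto)
  then obtain n where n: "\<forall>k\<ge>n. Tset g k = Tset g n" by blast
  have TSn: "Tset g (Suc n) = Tset g n" by (rule n[rule_format]) simp
  obtain y where y: "y \<in> Gam (g n)" "y \<noteq> \<zero>\<^bsub>M\<^esub>" using supp_info(2)[OF gS] by blast
  have yc: "y \<in> carrier M" using y Gam_carr by auto
  have "y \<oplus>\<^bsub>M\<^esub> \<zero>\<^bsub>M\<^esub> \<in> Tset g n" by (rule Tset.Tadd[of y g n n, OF y(1) order_refl Tset.T0])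
  then have "y \<in> Tset g (Suc n)" using yc TSn by simp
  moreover have Kv: "w \<in> Tset g j \<Longrightarrow> i0 < j \<Longrightarrow> \<exists>s\<in>carrier R - g i0. s \<odot>\<^bsub>M\<^esub> w = \<zero>\<^bsub>M\<^esub>" for w j i0
  proof (induction rule: Tset.induct)
    case T0
    have "\<one> \<in> carrier R - g i0"
      using gp[of i0] primeideal.I_notcarr ideal.one_imp_carrier primeideal.axioms(1) by fastforce
    then show ?case by (intro bexI[of _ \<one>]) simp_all
  next
    case (Tadd z i w)
    obtain s' where s': "s' \<in> carrier R - g i0" "s' \<odot>\<^bsub>M\<^esub> w = \<zero>\<^bsub>M\<^esub>" using Tadd by blast
    have "g i \<noteq> g i0"
    proof
      assume "g i = g i0"
      then have "i = i0" using g(1) by (simp add: inj_eq)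
      then show False using Tadd(2) Tadd.prems by simp
    qed
    then obtain a where a: "a \<in> g i" "a \<notin> g i0" using diff_elem[OF gm gp] by blast
    have ac: "a \<in> carrier R" using a gc by auto
    obtain k where k: "kill M (replicate k (g i)) z" and zc: "z \<in> carrier M" using Tadd(1) by (auto simp: Gam_def)
    have az: "(a [^] k) \<odot>\<^bsub>M\<^esub> z = \<zero>\<^bsub>M\<^esub>" by (rule kill_pow[OF gc a(1) zc k])
    have ak: "a [^] k \<in> carrier R - g i0" using prime_pow[OF gp ac a(2)] ac by simp
    have wc: "w \<in> carrier M" using Tc Tadd by blast
    have s'c: "s' \<in> carrier R" using s' by simp
    have akc: "a [^] k \<in> carrier R" using ac by simp
    have e1: "((a [^] k) \<otimes> s') \<odot>\<^bsub>M\<^esub> z = \<zero>\<^bsub>M\<^esub>"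
    proof -
      have "((a [^] k) \<otimes> s') \<odot>\<^bsub>M\<^esub> z = (s' \<otimes> (a [^] k)) \<odot>\<^bsub>M\<^esub> z" using akc s'c by (simp add: m_comm)
      also have "\<dots> = s' \<odot>\<^bsub>M\<^esub> ((a [^] k) \<odot>\<^bsub>M\<^esub> z)" using akc s'c zc by (simp add: smult_assoc1)
      finally show ?thesis using az s'c by simp
    qed
    have e2: "((a [^] k) \<otimes> s') \<odot>\<^bsub>M\<^esub> w = \<zero>\<^bsub>M\<^esub>" using akc s'c wc s'(2) by (simp add: smult_assoc1)
    have "((a [^] k) \<otimes> s') \<odot>\<^bsub>M\<^esub> (z \<oplus>\<^bsub>M\<^esub> w) = \<zero>\<^bsub>M\<^esub>"
      using akc s'c zc wc e1 e2 by (simp add: smult_r_distr)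
    then show ?case using ak s' primeideal.I_prime[OF gp, of "a [^] k" s'] ac s'c
      by (intro bexI[of _ "(a [^] k) \<otimes> s'"]) auto
  qed
  ultimately obtain s where s: "s \<in> carrier R - g n" "s \<odot>\<^bsub>M\<^esub> y = \<zero>\<^bsub>M\<^esub>" by blast
  have sc: "s \<in> carrier R" "s \<notin> g n" using s by auto
  have "y = \<zero>\<^bsub>M\<^esub>" by (rule gam_inj[OF gm[of n] sc y(1) s(2)])
  then show False using y(2) by simp
qed

lemma avoid:
  assumes q: "primeideal q R"
  shows "finite F \<Longrightarrow> (\<forall>m\<in>F. ideal m R \<and> \<not> m \<subseteq> q) \<Longrightarrow> \<exists>a\<in>carrier R - q. \<forall>m\<in>F. a \<in> m"
proof (induction F rule: finite_induct)
  case empty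
  have "\<one> \<in> carrier R - q"
    using q primeideal.I_notcarr ideal.one_imp_carrier primeideal.axioms(1) by fastforce
  then show ?case by blast
next
  case (insert m F)
  have "\<forall>m\<in>F. ideal m R \<and> \<not> m \<subseteq> q" using insert.prems by simp
  then obtain a where a: "a \<in> carrier R - q" "\<forall>m\<in>F. a \<in> m" using insert.IH by blast
  have mq: "ideal m R" "\<not> m \<subseteq> q" using insert.prems by simp_all
  then obtain b where b: "b \<in> m" "b \<notin> q" by blast
  have bc: "b \<in> carrier R" using ideal.Icarr[OF mq(1) b(1)] .
  have ac: "a \<in> carrier R" "a \<notin> q" using a(1) by simp_all
  have "a \<otimes> b \<notin> q"
  proof
    assume "a \<otimes> b \<in> q"
    then have "a \<in> q \<or> b \<in> q" by (rule primeideal.I_prime[OF q ac(1) bc])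
    then show False using ac b by blast
  qed
  then have ab1: "a \<otimes> b \<in> carrier R - q" using ac bc by simp
  have ab2: "a \<otimes> b \<in> m" by (rule ideal.I_l_closed[OF mq(1) b(1) ac(1)])
  have ab3: "\<forall>m'\<in>F. a \<otimes> b \<in> m'"
  proof
    fix m' assume m': "m' \<in> F"
    then have "ideal m' R" "a \<in> m'" using a(2) insert.prems by auto
    then show "a \<otimes> b \<in> m'" using bc by (simp add: ideal.I_r_closed)
  qed
  show ?case using ab1 ab2 ab3 by blast
qed

end


theorem lemma3p6:
  fixes R :: "'a ring" and M :: "('a, 'b) module"
  assumes "cring R" and "noetherian_ring R" and "artinian_module R M"
  shows "Supp R M \<subseteq> Cos R M \<and> Cos R M \<inter> V R (J R M) = Supp R M"
proof -
  have modRM: "module R M" using assms(3) by (simp add: artinian_module_def)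
  have dccRM: "\<And>N. (\<forall>k. submodule (N k) R M) \<Longrightarrow> (\<forall>k. N (Suc k) \<subseteq> N k) \<Longrightarrow> \<exists>n. \<forall>k\<ge>n. N k = N n"
    using assms(3) unfolding artinian_module_def by blast
  interpret A: artM R M
    by (rule artM.intro[OF modRM assms(2)]) (rule artM_axioms.intro, rule dccRM)
  have sub: "Supp R M \<subseteq> Cos R M"
  proof
    fix p assume p: "p \<in> Supp R M"
    obtain y where y: "y \<in> A.Gam p" "y \<noteq> \<zero>\<^bsub>M\<^esub>" using A.supp_info(2)[OF p] by blast
    show "p \<in> Cos R M" by (rule A.cos_mem[OF A.supp_info(1)[OF p] y])
  qed
  have "Cos R M \<inter> V R (J R M) \<subseteq> Supp R M"
  proof
    fix p assume p: "p \<in> Cos R M \<inter> V R (J R M)"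
    then have pp: "primeideal p R" and Jp: "J R M \<subseteq> p" by (auto simp: V_def Spec_def)
    have "\<exists>m\<in>Supp R M. m \<subseteq> p"
    proof (rule ccontr)
      assume nn: "\<not> ?thesis"
      have "\<forall>m\<in>Supp R M. ideal m R \<and> \<not> m \<subseteq> p"
        using nn by (auto simp: Supp_def Spec_def primeideal.axioms(1))
      then obtain a where a: "a \<in> carrier R - p" "\<forall>m\<in>Supp R M. a \<in> m"
        using A.avoid[OF pp A.finite_Supp] by blast
      then have "a \<in> J R M" by (simp add: J_def)
      then show False using Jp a by auto
    qed
    then obtain m where m: "m \<in> Supp R M" "m \<subseteq> p" by blast
    have mm: "maximalideal m R" by (rule A.supp_info(1)[OF m(1)])
    have pc: "p \<subseteq> carrier R" using ideal.Icarr[OF primeideal.axioms(1)[OF pp]] by blast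
    have "p = m \<or> p = carrier R"
      using maximalideal.I_maximal[OF mm primeideal.axioms(1)[OF pp] m(2) pc] .
    then show "p \<in> Supp R M" using m(1) primeideal.I_notcarr[OF pp] by auto
  qed
  moreover have "Supp R M \<subseteq> V R (J R M)"
    by (auto simp: V_def J_def Supp_def)
  ultimately show ?thesis using sub by blast
qed

end
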